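(* Let $f$ be an entire transcendental function of perfectly regular growth having order $\rho$ and type $\tau$. Then the quasi-optimal radius satisfies \[ r_\diamond(n)\sim\Big(\frac{n}{\tau\rho}\Big)^{1/\rho}\qquad(n\to\infty). \]
   Context: $M(r)=\max_\theta|f(re^{i\theta})|$. The order is $\rho=\limsup_{r\to\infty}\log\log M(r)/\log r$. An entire transcendental function of order $0<\rho<\infty$ is of perfectly regular growth if the limit $\tau=\lim_{r\to\infty}\log M(r)/r^\rho$ exists and is positive and finite; $\tau$ is its type. The quasi-optimal radius $r_\diamond(n)$ is the unique minimizer over $r>0$ of $r^{-n}M(r)$ (defined for $n$ larger than the index of the first nonzero Taylor coefficient). *)

theory Defs
  imports "HOL-Complex_Analysis.Complex_Analysis" "HOL-Library.Landau_Symbols"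
    "HOL-Computational_Algebra.Polynomial"
begin

definition max_mod :: "(complex \<Rightarrow> complex) \<Rightarrow> real \<Rightarrow> real" where
  "max_mod f r = Sup ((\<lambda>z. norm (f z)) ` sphere 0 r)"

definition entire_transcendental :: "(complex \<Rightarrow> complex) \<Rightarrow> bool" where
  "entire_transcendental f \<longleftrightarrow> f holomorphic_on UNIV \<and> \<not> (\<exists>p. \<forall>z. f z = poly p z)"

definition entire_order :: "(complex \<Rightarrow> complex) \<Rightarrow> ereal" where
  "entire_order f = Limsup at_top (\<lambda>r::real. ereal (ln (ln (max_mod f r)) / ln r))"

definition perfectly_regular_growth :: "(complex \<Rightarrow> complex) \<Rightarrow> real \<Rightarrow> real \<Rightarrow> bool" where
  "perfectly_regular_growth f \<rho> \<tau> \<longleftrightarrow>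
     entire_transcendental f \<and> 0 < \<rho> \<and> entire_order f = ereal \<rho> \<and>
     0 < \<tau> \<and> ((\<lambda>r. ln (max_mod f r) / r powr \<rho>) \<longlongrightarrow> \<tau>) at_top"

definition quasi_opt_radius :: "(complex \<Rightarrow> complex) \<Rightarrow> nat \<Rightarrow> real" where
  "quasi_opt_radius f n = (THE r. 0 < r \<and> (\<forall>s>0. max_mod f r / r ^ n \<le> max_mod f s / s ^ n))"

end

theory Submission imports Defs begin
lemma mm_attained:
  fixes f :: "complex \<Rightarrow> complex"
  assumes "continuous_on UNIV f" "0 \<le> r"
  shows "\<exists>z\<in>sphere 0 r. max_mod f r = norm (f z) \<and> (\<forall>w\<in>sphere 0 r. norm (f w) \<le> norm (f z))"
proof -
  have "compact (sphere (0::complex) r)" by simp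
  moreover have "sphere (0::complex) r \<noteq> {}" using assms(2) by simp
  moreover have "continuous_on (sphere 0 r) (\<lambda>z. norm (f z))"
    using assms(1) by (intro continuous_intros) (auto intro: continuous_on_subset)
  ultimately obtain z where z: "z \<in> sphere 0 r" "\<forall>w\<in>sphere 0 r. norm (f w) \<le> norm (f z)"
    using continuous_attains_sup by blast
  have "max_mod f r = norm (f z)" unfolding max_mod_def
    by (rule cSup_eq_maximum) (use z in auto)
  with z show ?thesis by blast
qed

lemma mm_ge:
  fixes f :: "complex \<Rightarrow> complex"
  assumes "continuous_on UNIV f" "norm w = r"
  shows "norm (f w) \<le> max_mod f r"
  using mm_attained[OF assms(1), of r] assms(2) by force

lemma mm_le:
  fixes f :: "complex \<Rightarrow> complex"
  assumes "continuous_on UNIV f" "0 \<le> r" "\<And>w. norm w = r \<Longrightarrow> norm (f w) \<le> B"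
  shows "max_mod f r \<le> B"
  using mm_attained[OF assms(1,2)] assms(3) by force

lemma mm_cauchy:
  fixes f :: "complex \<Rightarrow> complex"
  assumes "f holomorphic_on UNIV" "0 < r"
  shows "norm ((deriv ^^ k) f 0) / fact k * r ^ k \<le> max_mod f r"
proof -
  have c: "continuous_on UNIV f" using assms(1) holomorphic_on_imp_continuous_on by blast
  have "norm ((deriv ^^ k) f 0) \<le> fact k * max_mod f r / r ^ k"
    by (rule Cauchy_inequality) (use assms c in \<open>auto intro: holomorphic_on_subset continuous_on_subset mm_ge\<close>)
  then show ?thesis using assms(2) by (simp add: field_simps)
qed

lemma exists_nonzero_deriv:
  fixes f :: "complex \<Rightarrow> complex"
  assumes "entire_transcendental f"
  shows "\<exists>k. (deriv ^^ k) f 0 \<noteq> 0"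
proof (rule ccontr)
  assume "\<not> ?thesis"
  then have d: "\<And>k. (deriv ^^ k) f 0 = 0" by auto
  have "f w = 0" for w
    by (rule holomorphic_fun_eq_0_on_ball[of f 0 "norm w + 1" w])
       (use assms d in \<open>auto simp: entire_transcendental_def intro: holomorphic_on_subset\<close>)
  then have "\<forall>z. f z = poly 0 z" by simp
  then show False using assms unfolding entire_transcendental_def by blast
qed


lemma mm_scale_bound:
  fixes f :: "complex \<Rightarrow> complex"
  assumes c: "continuous_on UNIV f" and r: "0 < r" and s: "0 < s"
    and uc: "\<And>x y. norm x \<le> R \<Longrightarrow> norm y \<le> R \<Longrightarrow> dist x y < d \<Longrightarrow> dist (f x) (f y) < e"
    and "r \<le> R" "s \<le> R" "\<bar>s - r\<bar> < d"
  shows "max_mod f s \<le> max_mod f r + e"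
proof (rule mm_le[OF c])
  show "0 \<le> s" using s by simp
  fix w :: complex assume w: "norm w = s"
  define w' where "w' = of_real (r / s) * w"
  have nw': "norm w' = r" using w r s unfolding w'_def norm_mult norm_of_real by simp
  have "w - w' = of_real (1 - r/s) * w" by (simp add: w'_def algebra_simps)
  then have "norm (w - w') = \<bar>1 - r/s\<bar> * s" using w by (metis norm_mult norm_of_real)
  also have "\<dots> = \<bar>s - r\<bar>" using s by (simp add: abs_mult[symmetric] field_simps abs_of_pos)
  finally have "dist w w' < d" using assms(7) by (simp add: dist_norm)
  then have "dist (f w) (f w') < e" using uc[of w w'] w nw' assms(5,6) by simp
  then have "norm (f w) \<le> norm (f w') + e" by (metis dist_norm norm_triangle_sub add.commute order.strict_implies_order add_le_cancel_left order_trans norm_minus_commute)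
  also have "\<dots> \<le> max_mod f r + e" using mm_ge[OF c nw'] by simp
  finally show "norm (f w) \<le> max_mod f r + e" .
qed

lemma mm_cont:
  fixes f :: "complex \<Rightarrow> complex"
  assumes c: "continuous_on UNIV f" and r: "0 < r"
  shows "isCont (max_mod f) r"
proof -
  have "uniformly_continuous_on (cball 0 (2*r)) f"
    by (rule compact_uniformly_continuous) (use c in \<open>auto intro: continuous_on_subset\<close>)
  have "\<exists>d>0. \<forall>s. dist s r < d \<longrightarrow> dist (max_mod f s) (max_mod f r) < e" if e: "e > 0" for e
  proof -
    obtain d0 where d0: "d0 > 0" "\<And>x y. x \<in> cball 0 (2*r) \<Longrightarrow> y \<in> cball 0 (2*r) \<Longrightarrow> dist y x < d0 \<Longrightarrow> dist (f y) (f x) < e/2"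
      using \<open>uniformly_continuous_on (cball 0 (2*r)) f\<close> e unfolding uniformly_continuous_on_def
      by (metis half_gt_zero)
    have uc: "\<And>x y. norm x \<le> 2*r \<Longrightarrow> norm y \<le> 2*r \<Longrightarrow> dist x y < d0 \<Longrightarrow> dist (f x) (f y) < e/2"
      using d0(2) by (simp add: dist_commute)
    show ?thesis
    proof (intro exI[of _ "min d0 (r/2)"] conjI allI impI)
      show "min d0 (r/2) > 0" using d0 r by simp
      fix s assume "dist s r < min d0 (r/2)"
      then have sr: "\<bar>s - r\<bar> < d0" "\<bar>s - r\<bar> < r/2" by (auto simp: dist_real_def)
      then have s: "0 < s" "s \<le> 2*r" using r by (auto simp: abs_less_iff abs_if split: if_splits)
      have "max_mod f s \<le> max_mod f r + e/2"
        by (rule mm_scale_bound[OF c r s(1) uc]) (use sr s r in auto)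
      moreover have "max_mod f r \<le> max_mod f s + e/2"
        by (rule mm_scale_bound[OF c s(1) r uc]) (use sr s r in auto)
      ultimately show "dist (max_mod f s) (max_mod f r) < e" using e by (simp add: dist_real_def abs_le_iff)
    qed
  qed
  then show ?thesis by (simp add: continuous_at_eps_delta)
qed


lemma mm_min_unique:
  fixes f :: "complex \<Rightarrow> complex"
  assumes hol: "f holomorphic_on UNIV" and np: "\<not> (\<exists>p. \<forall>z. f z = poly p z)"
    and r1: "0 < r1" and r12: "r1 < r2"
    and m1: "\<forall>s>0. max_mod f r1 / r1 ^ n \<le> max_mod f s / s ^ n"
    and m2: "\<forall>s>0. max_mod f r2 / r2 ^ n \<le> max_mod f s / s ^ n"
  shows False
proof -
  have c: "continuous_on UNIV f" using hol holomorphic_on_imp_continuous_on by blast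
  define m where "m = max_mod f r1 / r1 ^ n"
  have r2: "0 < r2" using r1 r12 by simp
  have m2': "max_mod f r2 / r2 ^ n = m" using m1 m2 r1 r2 unfolding m_def by (meson order.antisym)
  define A where "A = {z::complex. r1 < norm z \<and> norm z < r2}"
  define C where "C = {z::complex. r1 \<le> norm z \<and> norm z \<le> r2}"
  define h where "h z = f z / z ^ n" for z
  have oA: "open A" unfolding A_def by (intro open_Collect_conj open_Collect_less continuous_intros)
  have cC: "closed C" unfolding C_def by (intro closed_Collect_conj closed_Collect_le continuous_intros)
  have AC: "A \<subseteq> C" unfolding A_def C_def by auto
  have clA: "closure A \<subseteq> C" using AC cC by (simp add: closure_minimal)
  have C0: "0 \<notin> C" using r1 unfolding C_def by auto
  have holh: "h holomorphic_on (-{0})" unfolding h_def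
    by (intro holomorphic_intros holomorphic_on_subset[OF hol]) auto
  have bound: "norm (h \<xi>) \<le> m" if "\<xi> \<in> A" for \<xi>
  proof (rule maximum_modulus_frontier[where S = A and f = h and \<xi> = \<xi>])
    show "h holomorphic_on interior A" using oA AC C0 by (auto intro: holomorphic_on_subset[OF holh] simp: interior_open)
    show "continuous_on (closure A) h" using clA C0
      by (intro continuous_on_subset[OF holomorphic_on_imp_continuous_on[OF holh]]) auto
    show "bounded A" by (rule bounded_subset[of "cball 0 r2"]) (auto simp: A_def)
    show "\<xi> \<in> A" by fact
  next
    fix z assume "z \<in> frontier A"
    then have "z \<in> C" "z \<notin> A" using clA oA by (auto simp: frontier_def interior_open)
    then have "norm z = r1 \<or> norm z = r2" unfolding A_def C_def by auto
    then show "norm (h z) \<le> m"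
    proof
      assume nz: "norm z = r1"
      have "norm (h z) = norm (f z) / r1 ^ n" by (simp add: h_def norm_divide norm_power nz)
      also have "\<dots> \<le> max_mod f r1 / r1 ^ n" using mm_ge[OF c nz] r1 by (simp add: divide_right_mono)
      finally show ?thesis by (simp add: m_def)
    next
      assume nz: "norm z = r2"
      have "norm (h z) = norm (f z) / r2 ^ n" by (simp add: h_def norm_divide norm_power nz)
      also have "\<dots> \<le> max_mod f r2 / r2 ^ n" using mm_ge[OF c nz] r2 by (simp add: divide_right_mono)
      finally show ?thesis using m2' by simp
    qed
  qed
  define r0 where "r0 = (r1 + r2) / 2"
  have r0: "0 \<le> r0" using r1 r2 by (simp add: r0_def)
  obtain z0 where z0: "z0 \<in> sphere 0 r0" "max_mod f r0 = norm (f z0)"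
    using mm_attained[OF c r0] by blast
  have r0p: "0 < r0" using r1 r2 by (simp add: r0_def)
  have "m \<le> max_mod f r0 / r0 ^ n" using m1 r0p unfolding m_def by simp
  also have "\<dots> = norm (h z0)" using z0 by (simp add: h_def norm_divide norm_power)
  finally have hz0: "m \<le> norm (h z0)" .
  define e where "e = (r2 - r1) / 2"
  have e: "e > 0" using r12 by (simp add: e_def)
  have ballA: "ball z0 e \<subseteq> A"
  proof
    fix z assume "z \<in> ball z0 e"
    then have "norm (z - z0) < e" by (simp add: dist_norm norm_minus_commute)
    moreover have "\<bar>norm z - norm z0\<bar> \<le> norm (z - z0)" by (rule norm_triangle_ineq3)
    ultimately show "z \<in> A" using z0(1) unfolding A_def e_def r0_def by (auto simp: abs_less_iff)
  qed
  have "h constant_on ball z0 e"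
  proof (rule maximum_modulus_principle[where U = "ball z0 e" and \<xi> = z0])
    show "h holomorphic_on ball z0 e" using ballA AC C0 by (auto intro: holomorphic_on_subset[OF holh])
    show "z0 \<in> ball z0 e" using e by simp
    fix z assume "z \<in> ball z0 e"
    then show "norm (h z) \<le> norm (h z0)" using bound ballA hz0 by force
  qed auto
  then obtain cc where cc: "\<And>z. z \<in> ball z0 e \<Longrightarrow> h z = cc" unfolding constant_on_def by blast
  have eq: "f z = cc * z ^ n" for z
  proof (rule analytic_continuation_open[where s = "ball z0 e" and s' = UNIV and g = "\<lambda>z. cc * z ^ n"])
    fix w assume w: "w \<in> ball z0 e"
    then have "w \<noteq> 0" using ballA AC C0 w by blast
    then show "f w = cc * w ^ n" using cc[OF w] by (simp add: h_def field_simps)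
  qed (use e hol in \<open>auto intro!: holomorphic_intros\<close>)
  then have "\<forall>z. f z = poly (monom cc n) z" by (simp add: poly_monom)
  then show False using np by blast
qed

context
  fixes f :: "complex \<Rightarrow> complex" and \<rho> \<tau> :: real
  assumes P: "perfectly_regular_growth f \<rho> \<tau>"
begin

lemma P_hol: "f holomorphic_on UNIV" and P_np: "\<not> (\<exists>p. \<forall>z. f z = poly p z)"
  and P_rho: "0 < \<rho>" and P_tau: "0 < \<tau>"
  and P_lim: "((\<lambda>r. ln (max_mod f r) / r powr \<rho>) \<longlongrightarrow> \<tau>) at_top"
  and P_et: "entire_transcendental f"
  using P unfolding perfectly_regular_growth_def entire_transcendental_def by auto

lemma P_cont: "continuous_on UNIV f"
  using P_hol holomorphic_on_imp_continuous_on by blast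

definition kk where "kk = (SOME k. (deriv ^^ k) f 0 \<noteq> 0)"
definition aa where "aa = norm ((deriv ^^ kk) f 0) / fact kk"

lemma aa_pos: "0 < aa"
proof -
  have "(deriv ^^ kk) f 0 \<noteq> 0" unfolding kk_def using exists_nonzero_deriv[OF P_et] by (rule someI_ex)
  then show ?thesis unfolding aa_def by simp
qed

lemma mm_lower: "0 < r \<Longrightarrow> aa * r ^ kk \<le> max_mod f r"
  using mm_cauchy[OF P_hol, of r kk] unfolding aa_def by simp

lemma mm_pos: "0 < r \<Longrightarrow> 0 < max_mod f r"
  using mm_lower[of r] aa_pos by (metis mult_pos_pos zero_less_power order_less_le_trans)

lemma ln_over_powr_0: "((\<lambda>r. ln r / r powr \<rho>) \<longlongrightarrow> 0) at_top"
proof (rule tendsto_sandwich[where f = "\<lambda>_. 0" and h = "\<lambda>r. (2/\<rho>) * r powr (-\<rho>/2)"])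
  show "\<forall>\<^sub>F r in at_top. 0 \<le> ln r / r powr \<rho>"
    using eventually_ge_at_top[of 1] by eventually_elim simp
  show "\<forall>\<^sub>F r in at_top. ln r / r powr \<rho> \<le> (2/\<rho>) * r powr (-\<rho>/2)"
    using eventually_ge_at_top[of 1]
  proof eventually_elim
    case (elim r)
    have "ln r \<le> r powr (\<rho>/2) / (\<rho>/2)" by (rule ln_powr_bound) (use elim P_rho in auto)
    then have "ln r / r powr \<rho> \<le> (r powr (\<rho>/2) / (\<rho>/2)) / r powr \<rho>"
      using elim by (intro divide_right_mono) auto
    also have "\<dots> = (2/\<rho>) * (r powr (\<rho>/2) / r powr \<rho>)" by simp
    also have "r powr (\<rho>/2) / r powr \<rho> = r powr (-\<rho>/2)"
      using elim by (simp add: powr_diff[symmetric])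
    finally show ?case .
  qed
  have "((\<lambda>r::real. r powr (-\<rho>/2)) \<longlongrightarrow> 0) at_top"
    by (rule tendsto_neg_powr) (use P_rho in \<open>auto intro: filterlim_ident\<close>)
  then show "((\<lambda>r. (2/\<rho>) * r powr (-\<rho>/2)) \<longlongrightarrow> 0) at_top"
    using tendsto_mult_right_zero by blast
qed auto

lemma big_r: "\<forall>\<^sub>F r in at_top. C < ln (max_mod f r) - real n * ln r"
proof -
  have e1: "\<forall>\<^sub>F r in at_top. ln (max_mod f r) / r powr \<rho> > \<tau>/2"
    using P_lim P_tau by (intro order_tendstoD) auto
  have "((\<lambda>r. real n * (ln r / r powr \<rho>)) \<longlongrightarrow> real n * 0) at_top"
    by (intro tendsto_intros ln_over_powr_0)
  then have e2: "\<forall>\<^sub>F r in at_top. real n * (ln r / r powr \<rho>) < \<tau>/4"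
    using P_tau by (intro order_tendstoD) auto
  have e3: "\<forall>\<^sub>F r in at_top. ln r > \<bar>C\<bar> * 4 / (\<tau> * \<rho>)"
    using ln_at_top by (rule filterlim_at_top_dense[THEN iffD1, rule_format])
  show ?thesis using e1 e2 e3 eventually_ge_at_top[of 1]
  proof eventually_elim
    case (elim r)
    have pp: "r powr \<rho> > 0" using elim by simp
    have "ln r \<le> r powr \<rho> / \<rho>" by (rule ln_powr_bound) (use elim P_rho in auto)
    then have "\<rho> * ln r \<le> r powr \<rho>" using P_rho by (simp add: field_simps)
    have a: "ln (max_mod f r) > \<tau>/2 * r powr \<rho>" using elim pp by (simp add: field_simps)
    have b: "real n * ln r < \<tau>/4 * r powr \<rho>" using elim pp by (simp add: field_simps)
    have "\<bar>C\<bar> * 4 < \<tau> * \<rho> * ln r" using elim P_rho P_tau by (simp add: field_simps)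
    also have "\<dots> \<le> \<tau> * r powr \<rho>" using \<open>\<rho> * ln r \<le> r powr \<rho>\<close> P_tau
      by (metis mult.assoc mult_le_cancel_left_pos)
    finally have c: "\<bar>C\<bar> < \<tau>/4 * r powr \<rho>" by simp
    show ?case using a b c by linarith
  qed
qed


definition phi where "phi n r = max_mod f r / r ^ n"

lemma phi_exists_min:
  assumes n: "kk < n"
  shows "\<exists>r>0. \<forall>s>0. phi n r \<le> phi n s"
proof -
  define v where "v = phi n 1"
  have v: "v = max_mod f 1" by (simp add: v_def phi_def)
  define a0 where "a0 = min 1 (aa / (v + 1))"
  have vpos: "0 < v" using mm_pos[of 1] v by simp
  have a0: "0 < a0" "a0 \<le> 1" using aa_pos vpos by (auto simp: a0_def)
  have small: "phi n s > v" if s: "0 < s" "s < a0" for s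
  proof -
    have s1: "s < 1" using s a0 by simp
    have "s ^ (n - kk) \<le> s ^ 1" using s s1 n by (intro power_decreasing) auto
    also have "\<dots> < aa / (v + 1)" using s a0_def by simp
    finally have "s ^ (n - kk) * (v + 1) < aa" using vpos by (simp add: field_simps)
    then have A: "v * s ^ (n - kk) < aa"
    proof -
      have "0 < s ^ (n - kk)" using s by simp
      then have "v * s ^ (n - kk) \<le> s ^ (n - kk) * (v + 1)" by (simp add: algebra_simps)
      then show ?thesis using \<open>s ^ (n - kk) * (v + 1) < aa\<close> by linarith
    qed
    have "s ^ n = s ^ kk * s ^ (n - kk)" using n by (simp add: power_add[symmetric])
    then have "v * s ^ n < aa * s ^ kk" using A s
      by (simp add: mult.commute mult.left_commute mult_strict_left_mono)
    also have "\<dots> \<le> max_mod f s" using mm_lower[OF s(1)] by simp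
    finally show ?thesis unfolding phi_def using s by (simp add: field_simps)
  qed
  obtain N where N: "\<And>s. s \<ge> N \<Longrightarrow> ln v < ln (max_mod f s) - real n * ln s"
    using big_r[of "ln v" n] unfolding eventually_at_top_linorder by blast
  define b0 where "b0 = max N 1"
  have big: "phi n s > v" if s: "s > b0" for s
  proof -
    have s0: "0 < s" "s \<ge> N" using s by (auto simp: b0_def)
    have "ln v < ln (max_mod f s) - real n * ln s" using N s0 by simp
    also have "\<dots> = ln (phi n s)" using s0 mm_pos[of s] by (simp add: phi_def ln_div ln_realpow)
    finally show ?thesis using vpos s0 mm_pos[of s] by (simp add: phi_def)
  qed
  have cont: "continuous_on {a0..b0} (phi n)"
  proof -
    have "isCont (phi n) x" if "x \<in> {a0..b0}" for x
    proof -
      have x: "0 < x" using that a0 by auto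
      show ?thesis unfolding phi_def using x
        by (intro continuous_intros mm_cont[OF P_cont x]) auto
    qed
    then show ?thesis by (simp add: continuous_at_imp_continuous_on)
  qed
  obtain r where r: "r \<in> {a0..b0}" "\<And>s. s \<in> {a0..b0} \<Longrightarrow> phi n r \<le> phi n s"
  proof -
    have "a0 \<le> b0" using a0 by (auto simp: b0_def)
    then have "{a0..b0} \<noteq> {}" by simp
    from continuous_attains_inf[OF compact_Icc this cont] that show ?thesis by blast
  qed
  have 1: "1 \<in> {a0..b0}" using a0 by (auto simp: b0_def)
  show ?thesis
  proof (intro exI[of _ r] conjI allI impI)
    show "0 < r" using r a0 by auto
    fix s :: real assume s: "0 < s"
    show "phi n r \<le> phi n s"
    proof (cases "s \<in> {a0..b0}")
      case True then show ?thesis using r by simp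
    next
      case False
      then have "s < a0 \<or> s > b0" by auto
      then have "phi n s > v" using small big s by auto
      then show ?thesis using r(2)[OF 1] v_def by simp
    qed
  qed
qed

lemma qor_char:
  assumes n: "kk < n"
  shows "0 < quasi_opt_radius f n \<and> (\<forall>s>0. phi n (quasi_opt_radius f n) \<le> phi n s)"
proof -
  have ex1: "\<exists>!r. 0 < r \<and> (\<forall>s>0. max_mod f r / r ^ n \<le> max_mod f s / s ^ n)"
  proof (rule ex_ex1I)
    show "\<exists>r. 0 < r \<and> (\<forall>s>0. max_mod f r / r ^ n \<le> max_mod f s / s ^ n)"
      using phi_exists_min[OF n] unfolding phi_def by blast
  next
    fix x y assume x: "0 < x \<and> (\<forall>s>0. max_mod f x / x ^ n \<le> max_mod f s / s ^ n)"
      and y: "0 < y \<and> (\<forall>s>0. max_mod f y / y ^ n \<le> max_mod f s / s ^ n)"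
    show "x = y"
    proof (rule ccontr)
      assume "x \<noteq> y"
      then have "x < y \<or> y < x" by auto
      then show False
      proof
        assume "x < y" then show False
          using mm_min_unique[OF P_hol P_np _ _] x y by blast
      next
        assume "y < x" then show False
          using mm_min_unique[OF P_hol P_np _ _] x y by blast
      qed
    qed
  qed
  show ?thesis using theI'[OF ex1] unfolding quasi_opt_radius_def phi_def by blast
qed

lemma qor_ineq:
  assumes n: "kk < n" and c: "0 < c"
  shows "ln (max_mod f (quasi_opt_radius f n)) + real n * ln c \<le> ln (max_mod f (c * quasi_opt_radius f n))"
proof -
  let ?r = "quasi_opt_radius f n"
  have r: "0 < ?r" and m: "phi n ?r \<le> phi n (c * ?r)" using qor_char[OF n] c by auto
  have cr: "0 < c * ?r" using r c by simp
  have "ln (phi n ?r) \<le> ln (phi n (c * ?r))"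
    using m r cr mm_pos by (simp add: phi_def)
  moreover have "ln (phi n ?r) = ln (max_mod f ?r) - real n * ln ?r"
    using r mm_pos[of ?r] unfolding phi_def by (simp add: ln_div ln_realpow)
  moreover have "ln (phi n (c * ?r)) = ln (max_mod f (c * ?r)) - real n * ln (c * ?r)"
    using cr mm_pos[of "c * ?r"] unfolding phi_def by (subst ln_div) (auto simp: ln_realpow)
  ultimately have "ln (max_mod f ?r) - real n * ln ?r \<le> ln (max_mod f (c * ?r)) - real n * ln (c * ?r)"
    by simp
  then show ?thesis using r c by (simp add: ln_mult algebra_simps)
qed

lemma qor_to_inf: "filterlim (quasi_opt_radius f) at_top sequentially"
proof (subst filterlim_at_top, intro allI)
  fix Z :: real
  define K where "K = max Z 1"
  have K: "1 \<le> K" "Z \<le> K" by (auto simp: K_def)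
  define C where "C = ln (max_mod f (2*K)) - ln aa"
  obtain N :: nat where N: "C / ln 2 < real N" using reals_Archimedean2 by blast
  have "\<forall>\<^sub>F n in sequentially. n > max kk N" by (rule eventually_gt_at_top)
  then show "\<forall>\<^sub>F n in sequentially. Z \<le> quasi_opt_radius f n"
  proof eventually_elim
    case (elim n)
    let ?r = "quasi_opt_radius f n"
    have n: "kk < n" "N < n" using elim by auto
    have r: "0 < ?r" using qor_char[OF n(1)] by simp
    show ?case
    proof (rule ccontr)
      assume "\<not> Z \<le> ?r"
      then have rK: "?r \<le> K" using K by simp
      define c where "c = 2*K / ?r"
      have c: "0 < c" using r K by (simp add: c_def)
      have cr: "c * ?r = 2*K" using r by (simp add: c_def)
      have I: "ln (max_mod f ?r) + real n * ln c \<le> ln (max_mod f (2*K))"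
        using qor_ineq[OF n(1) c] cr by simp
      have "ln (aa * ?r ^ kk) \<le> ln (max_mod f ?r)"
        using mm_lower[OF r] aa_pos r mm_pos[OF r] by (intro ln_le_cancel_iff[THEN iffD2]) auto
      then have L1: "ln aa + real kk * ln ?r \<le> ln (max_mod f ?r)"
        using aa_pos r by (simp add: ln_mult ln_realpow)
      have lnc: "ln c = ln 2 + ln K - ln ?r" using r K by (simp add: c_def ln_div ln_mult)
      have lr: "ln ?r \<le> ln K" using rK r by simp
      have lK: "0 \<le> ln K" using K by simp
      have "real n * ln 2 \<le> C"
      proof -
        have "ln aa + real kk * ln ?r + real n * (ln 2 + ln K - ln ?r) \<le> ln (max_mod f (2*K))"
          using I L1 lnc by simp
        moreover have "real kk * ln ?r + real n * (ln K - ln ?r) \<ge> 0"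
        proof -
          have "real kk * ln ?r + real n * (ln K - ln ?r) = real kk * ln K + (real n - real kk) * (ln K - ln ?r)"
            by (simp add: algebra_simps)
          moreover have "(real n - real kk) * (ln K - ln ?r) \<ge> 0" using n lr by simp
          moreover have "real kk * ln K \<ge> 0" using lK by simp
          ultimately show ?thesis by linarith
        qed
        ultimately show ?thesis unfolding C_def by (simp add: algebra_simps)
      qed
      moreover have "C < real n * ln 2" using N n by (simp add: field_simps) (smt (verit) ln_gt_zero_iff mult_strict_right_mono of_nat_less_iff)
      ultimately show False by simp
    qed
  qed
qed

definition ell :: "real \<Rightarrow> real" where "ell h = ln (1 + h) / h"

lemma ell_lim: "(ell \<longlongrightarrow> 1) (at_right 0)"
proof -
  have "DERIV (ln::real\<Rightarrow>real) 1 :> inverse 1" using DERIV_ln[of 1] by simp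
  then have "((\<lambda>h::real. (ln (1 + h) - ln 1) / h) \<longlongrightarrow> 1) (at 0)" by (simp add: DERIV_def)
  then have "(ell \<longlongrightarrow> 1) (at 0)" by (simp add: ell_def[abs_def])
  then show ?thesis by (rule filterlim_within_subset) simp
qed


lemma growth_bounds:
  assumes d: "0 < d"
  obtains X where "0 < X" "\<And>x. X \<le> x \<Longrightarrow> (\<tau> - d) * x powr \<rho> < ln (max_mod f x) \<and> ln (max_mod f x) < (\<tau> + d) * x powr \<rho>"
proof -
  have "\<forall>\<^sub>F x in at_top. dist (ln (max_mod f x) / x powr \<rho>) \<tau> < d"
    using P_lim d by (rule tendstoD)
  then obtain X0 where X0: "\<And>x. X0 \<le> x \<Longrightarrow> dist (ln (max_mod f x) / x powr \<rho>) \<tau> < d"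
    unfolding eventually_at_top_linorder by blast
  show ?thesis
  proof (rule that[of "max X0 1"])
    fix x assume x: "max X0 1 \<le> x"
    then have x0: "0 < x" "X0 \<le> x" by auto
    have pp: "0 < x powr \<rho>" using x0 by simp
    have "\<bar>ln (max_mod f x) / x powr \<rho> - \<tau>\<bar> < d" using X0[OF x0(2)] by (simp add: dist_real_def)
    then have "\<tau> - d < ln (max_mod f x) / x powr \<rho>" "ln (max_mod f x) / x powr \<rho> < \<tau> + d" by auto
    then show "(\<tau> - d) * x powr \<rho> < ln (max_mod f x) \<and> ln (max_mod f x) < (\<tau> + d) * x powr \<rho>"
      using pp by (simp add: field_simps)
  qed simp
qed

definition qq :: "nat \<Rightarrow> real" where "qq n = quasi_opt_radius f n powr \<rho> / real n"

lemma qq_lower: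
  assumes h: "0 < h" "h * (2 + h) < \<tau>"
  shows "\<forall>\<^sub>F n in sequentially. ell h / (\<rho> * (\<tau> + h * (2 + h))) < qq n"
proof -
  define d where "d = h^2"
  have d: "0 < d" using h by (simp add: d_def)
  obtain X where X: "0 < X" "\<And>x. X \<le> x \<Longrightarrow> (\<tau> - d) * x powr \<rho> < ln (max_mod f x) \<and> ln (max_mod f x) < (\<tau> + d) * x powr \<rho>"
    using growth_bounds[OF d] by blast
  define c where "c = (1 + h) powr (1 / \<rho>)"
  have c1: "1 \<le> c" using h P_rho by (simp add: c_def ge_one_powr_ge_zero)
  have cpow: "c powr \<rho> = 1 + h" using h P_rho by (simp add: c_def powr_powr)
  have lnc: "ln c = ln (1 + h) / \<rho>" using h by (simp add: c_def)
  have ev: "\<forall>\<^sub>F n in sequentially. X \<le> quasi_opt_radius f n"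
    using qor_to_inf by (simp add: filterlim_at_top)
  show ?thesis using ev eventually_gt_at_top[of kk] eventually_gt_at_top[of 0]
  proof eventually_elim
    case (elim n)
    let ?r = "quasi_opt_radius f n"
    have r: "0 < ?r" using X elim by simp
    define R where "R = ?r powr \<rho>"
    have R: "0 < R" using r by (simp add: R_def)
    have "1 * ?r \<le> c * ?r" using c1 r by (intro mult_right_mono) auto
    then have crX: "X \<le> c * ?r" using elim by simp
    have I: "ln (max_mod f ?r) + real n * ln c \<le> ln (max_mod f (c * ?r))"
      using qor_ineq[OF elim(2)] c1 by simp
    have "(c * ?r) powr \<rho> = (1 + h) * R" using c1 r by (simp add: powr_mult cpow R_def)
    then have A: "ln (max_mod f (c * ?r)) < (\<tau> + d) * ((1 + h) * R)" using X(2)[OF crX] by simp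
    have B: "(\<tau> - d) * R < ln (max_mod f ?r)" using X(2)[OF elim(1)] by (simp add: R_def)
    have "(\<tau> - d) * R + real n * (ln (1 + h) / \<rho>) < (\<tau> + d) * ((1 + h) * R)"
      using A B I lnc by simp
    then have "real n * (ln (1 + h) / \<rho>) < R * (\<tau> * h + d * (2 + h))"
      by (simp add: algebra_simps)
    then have C: "real n * ln (1 + h) < \<rho> * R * (h * (\<tau> + h * (2 + h)))"
      using P_rho by (simp add: field_simps d_def power2_eq_square)
    have "0 < h * (2 + h)" using h by simp
    then have pos: "0 < \<rho> * (\<tau> + h * (2 + h))" using P_rho P_tau by (intro mult_pos_pos) linarith+
    have nn: "0 < real n" using elim by simp
    define D where "D = \<rho> * (\<tau> + h * (2 + h))"
    have D: "0 < D" using pos by (simp add: D_def)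
    have hnD: "0 < real n * h * D" using nn h D by simp
    have E: "ell h / D = (real n * ln (1 + h)) / (real n * h * D)" using nn h D by (simp add: ell_def)
    also have "\<dots> < (R * D * h) / (real n * h * D)"
      by (rule divide_strict_right_mono) (use C hnD in \<open>simp_all add: D_def algebra_simps\<close>)
    also have "(R * D * h) / (real n * h * D) = R / real n" using nn h D by simp
    finally show ?case unfolding qq_def R_def D_def .
  qed
qed

lemma qq_upper:
  assumes h: "0 < h" "h * (2 + h) < \<tau>"
  shows "\<forall>\<^sub>F n in sequentially. qq n < ell h * (1 + h) / (\<rho> * (\<tau> - h * (2 + h)))"
proof -
  define d where "d = h^2"
  have d: "0 < d" using h by (simp add: d_def)
  obtain X where X: "0 < X" "\<And>x. X \<le> x \<Longrightarrow> (\<tau> - d) * x powr \<rho> < ln (max_mod f x) \<and> ln (max_mod f x) < (\<tau> + d) * x powr \<rho>"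
    using growth_bounds[OF d] by blast
  define c where "c = (1 + h) powr (- 1 / \<rho>)"
  have c0: "0 < c" using h by (simp add: c_def)
  have cpow: "c powr \<rho> = 1 / (1 + h)"
  proof -
    have "c powr \<rho> = (1 + h) powr ((- 1 / \<rho>) * \<rho>)" by (simp only: c_def powr_powr)
    also have "(- 1 / \<rho>) * \<rho> = - 1" using P_rho by simp
    also have "(1 + h) powr (- 1) = 1 / (1 + h)" using h by (simp add: powr_minus_divide)
    finally show ?thesis .
  qed
  have lnc: "ln c = - ln (1 + h) / \<rho>" using h by (simp add: c_def)
  have ev: "\<forall>\<^sub>F n in sequentially. X / c \<le> quasi_opt_radius f n"
    using qor_to_inf by (simp add: filterlim_at_top)
  show ?thesis using ev eventually_gt_at_top[of kk] eventually_gt_at_top[of 0]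
  proof eventually_elim
    case (elim n)
    let ?r = "quasi_opt_radius f n"
    have r: "0 < ?r" using qor_char elim by blast
    define R where "R = ?r powr \<rho>"
    have R: "0 < R" using r by (simp add: R_def)
    have crX: "X \<le> c * ?r" using elim c0 by (simp add: field_simps)
    have I: "ln (max_mod f ?r) + real n * ln c \<le> ln (max_mod f (c * ?r))"
      using qor_ineq[OF elim(2) c0] by simp
    have "(c * ?r) powr \<rho> = R / (1 + h)" using c0 r by (simp add: powr_mult cpow R_def)
    then have A: "ln (max_mod f (c * ?r)) < (\<tau> + d) * (R / (1 + h))" using X(2)[OF crX] by simp
    have rX: "X \<le> ?r"
    proof -
      have e1: "c = 1 / (1 + h) powr (1 / \<rho>)" by (simp add: c_def powr_minus_divide)
      have "1 \<le> (1 + h) powr (1 / \<rho>)" using h P_rho by (intro ge_one_powr_ge_zero) auto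
      then have "c \<le> 1" unfolding e1 by (subst divide_le_eq_1) auto
      then have "X \<le> X / c" using X(1) c0 by (simp add: field_simps)
      then show ?thesis using elim by simp
    qed
    have B: "(\<tau> - d) * R < ln (max_mod f ?r)" using X(2)[OF rX] by (simp add: R_def)
    have "(\<tau> - d) * R - real n * (ln (1 + h) / \<rho>) < (\<tau> + d) * (R / (1 + h))"
      using A B I lnc by simp
    then have "(\<tau> - d) * R * (1 + h) - real n * (ln (1 + h) / \<rho>) * (1 + h) < (\<tau> + d) * R"
      using h by (simp add: field_simps)
    then have "R * (\<tau> * h - d * (2 + h)) < real n * (ln (1 + h) / \<rho>) * (1 + h)"
      by (simp add: algebra_simps)
    then have C: "\<rho> * R * (h * (\<tau> - h * (2 + h))) < real n * ln (1 + h) * (1 + h)"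
      using P_rho by (simp add: field_simps d_def power2_eq_square)
    have pos: "0 < \<rho> * (\<tau> - h * (2 + h))" using P_rho h by simp
    have nn: "0 < real n" using elim by simp
    define D where "D = \<rho> * (\<tau> - h * (2 + h))"
    have D: "0 < D" using pos by (simp add: D_def)
    have hnD: "0 < real n * h * D" using nn h D by simp
    have "R / real n = (R * D * h) / (real n * h * D)" using nn h D by simp
    also have "\<dots> < (real n * ln (1 + h) * (1 + h)) / (real n * h * D)"
      by (rule divide_strict_right_mono) (use C hnD in \<open>simp_all add: D_def algebra_simps\<close>)
    also have "\<dots> = ell h * (1 + h) / D" using nn h D by (simp add: ell_def)
    finally show ?case unfolding qq_def R_def D_def .
  qed
qed


lemma small_h_lim: "((\<lambda>h::real. h * (2 + h)) \<longlongrightarrow> 0) (at_right 0)"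
proof -
  have "((\<lambda>h::real. h * (2 + h)) \<longlongrightarrow> 0 * (2 + 0)) (at_right 0)"
    by (intro tendsto_intros)
  then show ?thesis by simp
qed

lemma qq_lim: "(qq \<longlongrightarrow> 1 / (\<tau> * \<rho>)) sequentially"
proof (rule order_tendstoI)
  fix a assume a: "a < 1 / (\<tau> * \<rho>)"
  have "((\<lambda>h. ell h / (\<rho> * (\<tau> + h * (2 + h)))) \<longlongrightarrow> 1 / (\<rho> * (\<tau> + 0 * (2 + 0)))) (at_right 0)"
    by (intro tendsto_intros ell_lim) (use P_rho P_tau in auto)
  then have l: "((\<lambda>h. ell h / (\<rho> * (\<tau> + h * (2 + h)))) \<longlongrightarrow> 1 / (\<tau> * \<rho>)) (at_right 0)"
    by (simp add: mult.commute)
  have ev: "\<forall>\<^sub>F h in at_right 0. a < ell h / (\<rho> * (\<tau> + h * (2 + h))) \<and> h * (2 + h) < \<tau> \<and> 0 < h"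
    using order_tendstoD(1)[OF l a] order_tendstoD(2)[OF small_h_lim P_tau] eventually_at_right_less[of "0::real"]
    by eventually_elim auto
  then obtain h where h: "a < ell h / (\<rho> * (\<tau> + h * (2 + h)))" "h * (2 + h) < \<tau>" "0 < h"
    using eventually_happens[OF ev] by auto
  show "\<forall>\<^sub>F n in sequentially. a < qq n"
    using qq_lower[OF h(3) h(2)] by eventually_elim (use h(1) in linarith)
next
  fix b assume b: "1 / (\<tau> * \<rho>) < b"
  have "((\<lambda>h. ell h * (1 + h) / (\<rho> * (\<tau> - h * (2 + h)))) \<longlongrightarrow> 1 * (1 + 0) / (\<rho> * (\<tau> - 0 * (2 + 0)))) (at_right 0)"
    by (intro tendsto_intros ell_lim) (use P_rho P_tau in auto)
  then have l: "((\<lambda>h. ell h * (1 + h) / (\<rho> * (\<tau> - h * (2 + h)))) \<longlongrightarrow> 1 / (\<tau> * \<rho>)) (at_right 0)"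
    by (simp add: mult.commute)
  have ev: "\<forall>\<^sub>F h in at_right 0. ell h * (1 + h) / (\<rho> * (\<tau> - h * (2 + h))) < b \<and> h * (2 + h) < \<tau> \<and> 0 < h"
    using order_tendstoD(2)[OF l b] order_tendstoD(2)[OF small_h_lim P_tau] eventually_at_right_less[of "0::real"]
    by eventually_elim auto
  then obtain h where h: "ell h * (1 + h) / (\<rho> * (\<tau> - h * (2 + h))) < b" "h * (2 + h) < \<tau>" "0 < h"
    using eventually_happens[OF ev] by auto
  show "\<forall>\<^sub>F n in sequentially. qq n < b"
    using qq_upper[OF h(3) h(2)] by eventually_elim (use h(1) in linarith)
qed

lemma main_ratio:
  "((\<lambda>n. quasi_opt_radius f n / (real n / (\<tau> * \<rho>)) powr (1 / \<rho>)) \<longlongrightarrow> 1) sequentially"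
proof -
  have "((\<lambda>n. (qq n * (\<tau> * \<rho>)) powr (1 / \<rho>)) \<longlongrightarrow> (1 / (\<tau> * \<rho>) * (\<tau> * \<rho>)) powr (1 / \<rho>)) sequentially"
    by (intro tendsto_powr tendsto_intros qq_lim) (use P_rho P_tau in auto)
  then have l: "((\<lambda>n. (qq n * (\<tau> * \<rho>)) powr (1 / \<rho>)) \<longlongrightarrow> 1) sequentially"
    using P_rho P_tau by simp
  have "\<forall>\<^sub>F n in sequentially. (qq n * (\<tau> * \<rho>)) powr (1 / \<rho>) = quasi_opt_radius f n / (real n / (\<tau> * \<rho>)) powr (1 / \<rho>)"
    using eventually_gt_at_top[of kk] eventually_gt_at_top[of 0]
  proof eventually_elim
    case (elim n)
    let ?r = "quasi_opt_radius f n"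
    have r: "0 < ?r" using qor_char elim by blast
    have tr: "0 < \<tau> * \<rho>" using P_rho P_tau by simp
    have eq: "qq n * (\<tau> * \<rho>) = ?r powr \<rho> / (real n / (\<tau> * \<rho>))"
      unfolding qq_def using elim tr by simp
    have "(qq n * (\<tau> * \<rho>)) powr (1 / \<rho>) = (?r powr \<rho> / (real n / (\<tau> * \<rho>))) powr (1 / \<rho>)"
      by (simp only: eq)
    also have "\<dots> = (?r powr \<rho>) powr (1 / \<rho>) / (real n / (\<tau> * \<rho>)) powr (1 / \<rho>)"
      by (rule powr_divide)
    also have "(?r powr \<rho>) powr (1 / \<rho>) = ?r" using r P_rho by (simp add: powr_powr)
    finally show ?case .
  qed
  then show ?thesis using l by (rule Lim_transform_eventually[rotated])
qed

end

theorem theorem8p2: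
  fixes f :: "complex \<Rightarrow> complex" and \<rho> \<tau> :: real
  assumes "perfectly_regular_growth f \<rho> \<tau>"
  shows "(\<lambda>n. quasi_opt_radius f n) \<sim>[sequentially] (\<lambda>n. (real n / (\<tau> * \<rho>)) powr (1 / \<rho>))"
  by (rule asymp_equivI') (rule main_ratio[OF assms])

end
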